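(* Consider three agents $a,b,c$, each starting with an input value in $\{0,1\}$ (all $8$ input assignments are possible), communicating in the full-information iterated immediate snapshot model described in the context. For no number $R \ge 0$ of rounds does there exist a decision protocol solving the (0-)majority consensus task. That is, there is no family of functions $\delta_i$ ($i \in \{a,b,c\}$), mapping the possible final local states of agent $i$ after $R$ rounds to $\{0,1\}$, such that for every input assignment and every sequence of $R$ communication graphs from the immediate snapshot model, the output triple $(\delta_a(\ell_a),\delta_b(\ell_b),\delta_c(\ell_c))$ of the final local states satisfies both majority agreement and validity.
   Context: Agents: $\mathrm{Ag}=\{a,b,c\}$. A communication graph is a reflexive relation $G \subseteq \mathrm{Ag}\times\mathrm{Ag}$; write $j \to i$ for $(j,i)\in G$. Full-information dynamics: initially the local state of agent $i$ is its input value $x_i$. In a round with communication graph $G$, if the current local states are $(\ell_a,\ell_b,\ell_c)$, the new local state of agent $i$ is the tuple $(m_a,m_b,m_c)$ where $m_j=\ell_j$ if $j\to i$ in $G$ and $m_j=\bot$ (no message) otherwise. In each round a graph is chosen arbitrarily (independently of previous rounds) from the model's set of graphs. The immediate snapshot model is the set of $13$ graphs obtained as follows: for each ordered partition $(B_1,\dots,B_k)$ of $\mathrm{Ag}$ into nonempty blocks, $j\to i$ iff the block containing $j$ has index at most the index of the block containing $i$. Majority consensus task: each agent outputs a value in $\{0,1\}$ computed only from its final local state; (majority agreement) either all three outputs are equal, or a majority (at least two) of the outputs are $0$; (validity) every output value is one of the input values of the execution (in particular, if all inputs equal $v$ then all outputs equal $v$). *)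

theory Defs
  imports Main
begin

datatype agent = Ag_a | Ag_b | Ag_c

lemma UNIV_agent: "(UNIV :: agent set) = {Ag_a, Ag_b, Ag_c}"
  using agent.exhaust by blast

text \<open>Local states of the full-information protocol: either an initial input value
  (False = 0, True = 1) or a tuple of received messages, None meaning no message.\<close>
datatype lstate = Inp bool | Msgs "agent \<Rightarrow> lstate option"

type_synonym graph = "(agent \<times> agent) set"

text \<open>(j, i) \<in> G means j \<rightarrow> i.\<close>

definition ordered_partition :: "agent set list \<Rightarrow> bool" where
  "ordered_partition Bs \<longleftrightarrow>
     (\<forall>k < length Bs. Bs ! k \<noteq> {}) \<and>
     (\<forall>k < length Bs. \<forall>m < length Bs. k \<noteq> m \<longrightarrow> Bs ! k \<inter> Bs ! m = {}) \<and>
     (\<Union>(set Bs) = UNIV)"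

definition graph_of_partition :: "agent set list \<Rightarrow> graph" where
  "graph_of_partition Bs =
     {(j, i). \<exists>k < length Bs. \<exists>m < length Bs. j \<in> Bs ! k \<and> i \<in> Bs ! m \<and> k \<le> m}"

definition IS_graphs :: "graph set" where
  "IS_graphs = {graph_of_partition Bs | Bs. ordered_partition Bs}"

definition round_step :: "graph \<Rightarrow> (agent \<Rightarrow> lstate) \<Rightarrow> (agent \<Rightarrow> lstate)" where
  "round_step G l = (\<lambda>i. Msgs (\<lambda>j. if (j, i) \<in> G then Some (l j) else None))"

definition initial_state :: "(agent \<Rightarrow> bool) \<Rightarrow> (agent \<Rightarrow> lstate)" where
  "initial_state x = (\<lambda>i. Inp (x i))"

definition run :: "(agent \<Rightarrow> bool) \<Rightarrow> graph list \<Rightarrow> (agent \<Rightarrow> lstate)" where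
  "run x Gs = fold round_step Gs (initial_state x)"

definition majority_agreement :: "(agent \<Rightarrow> bool) \<Rightarrow> bool" where
  "majority_agreement y \<longleftrightarrow>
     (y Ag_a = y Ag_b \<and> y Ag_b = y Ag_c) \<or> card {i. y i = False} \<ge> 2"

definition validity :: "(agent \<Rightarrow> bool) \<Rightarrow> (agent \<Rightarrow> bool) \<Rightarrow> bool" where
  "validity x y \<longleftrightarrow> (\<forall>i. \<exists>j. y i = x j)"

definition solves_majority_consensus :: "nat \<Rightarrow> (agent \<Rightarrow> lstate \<Rightarrow> bool) \<Rightarrow> bool" where
  "solves_majority_consensus R \<delta> \<longleftrightarrow>
     (\<forall>x Gs. length Gs = R \<longrightarrow> set Gs \<subseteq> IS_graphs \<longrightarrow>
        (let l = run x Gs; y = (\<lambda>i. \<delta> i (l i)) in majority_agreement y \<and> validity x y))"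

end

theory Submission
  imports Defs
begin

lemma gp1: "graph_of_partition [A] = A \<times> A"
  by (auto simp: graph_of_partition_def)

lemma gp2: "(u, v) \<in> graph_of_partition [A, B] \<longleftrightarrow>
   (u \<in> A \<and> v \<in> A) \<or> (u \<in> A \<and> v \<in> B) \<or> (u \<in> B \<and> v \<in> B)"
  unfolding graph_of_partition_def
  apply (simp add: less_Suc_eq)
  apply (rule iffI)
   apply (elim exE conjE disjE; simp)
  apply (elim disjE conjE)
    apply (rule exI[of _ 0], simp, rule exI[of _ 0], simp)
   apply (rule exI[of _ 0], simp, rule exI[of _ 1], simp)
  apply (rule exI[of _ 1], simp, rule exI[of _ 1], simp)
  done

lemma gp3: "(u, v) \<in> graph_of_partition [A, B, C] \<longleftrightarrow>
   (u \<in> A \<and> v \<in> A) \<or> (u \<in> A \<and> v \<in> B) \<or> (u \<in> B \<and> v \<in> B)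
   \<or> (u \<in> A \<and> v \<in> C) \<or> (u \<in> B \<and> v \<in> C) \<or> (u \<in> C \<and> v \<in> C)"
  unfolding graph_of_partition_def
  apply (simp add: less_Suc_eq)
  apply (rule iffI)
   apply (elim exE conjE disjE; simp)
  apply (elim disjE conjE)
       apply (rule exI[of _ 0], simp, rule exI[of _ 0], simp)
      apply (rule exI[of _ 0], simp, rule exI[of _ 1], simp)
     apply (rule exI[of _ 1], simp, rule exI[of _ 1], simp)
    apply (rule exI[of _ 0], simp, rule exI[of _ 2], simp add: numeral_2_eq_2)
   apply (rule exI[of _ 1], simp, rule exI[of _ 2], simp add: numeral_2_eq_2)
  apply (rule exI[of _ 2], simp add: numeral_2_eq_2, rule exI[of _ 2], simp add: numeral_2_eq_2)
  done

lemma op1: "ordered_partition [UNIV]"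
  by (auto simp: ordered_partition_def)

lemma op2: "i \<noteq> j \<Longrightarrow> j \<noteq> k \<Longrightarrow> i \<noteq> k \<Longrightarrow> ordered_partition [{i}, {j, k}]"
  unfolding ordered_partition_def
  by (cases i; cases j; cases k; auto simp: All_less_Suc less_Suc_eq UNIV_agent)

lemma op2b: "i \<noteq> j \<Longrightarrow> j \<noteq> k \<Longrightarrow> i \<noteq> k \<Longrightarrow> ordered_partition [{i, j}, {k}]"
  unfolding ordered_partition_def
  by (cases i; cases j; cases k; auto simp: All_less_Suc less_Suc_eq UNIV_agent)

lemma op3: "i \<noteq> j \<Longrightarrow> j \<noteq> k \<Longrightarrow> i \<noteq> k \<Longrightarrow> ordered_partition [{i}, {j}, {k}]"
  unfolding ordered_partition_def
  by (cases i; cases j; cases k; auto simp: All_less_Suc less_Suc_eq UNIV_agent)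

definition Gf :: graph where "Gf = graph_of_partition [UNIV]"

definition agree2 :: "(agent \<Rightarrow> lstate) \<Rightarrow> (agent \<Rightarrow> lstate) \<Rightarrow> bool" where
  "agree2 L L' \<longleftrightarrow> (\<exists>i j. i \<noteq> j \<and> L i = L' i \<and> L j = L' j)"

definition okg :: "nat \<Rightarrow> graph list \<Rightarrow> bool" where
  "okg R Gs \<longleftrightarrow> length Gs = R \<and> set Gs \<subseteq> IS_graphs"

definition stp :: "nat \<Rightarrow> ((agent \<Rightarrow> bool) \<times> graph list) \<Rightarrow> ((agent \<Rightarrow> bool) \<times> graph list) \<Rightarrow> bool" where
  "stp R p q \<longleftrightarrow> okg R (snd p) \<and> okg R (snd q) \<and> agree2 (run (fst p) (snd p)) (run (fst q) (snd q))"

lemma run_snoc: "run x (Gs @ [G]) = round_step G (run x Gs)"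
  by (simp add: run_def)

lemma third: "i \<noteq> (j::agent) \<Longrightarrow> \<exists>k. k \<noteq> i \<and> k \<noteq> j"
  by (cases i; cases j; auto intro: agent.exhaust)

lemma one_round:
  assumes ij: "i \<noteq> j" and ki: "k \<noteq> i" and kj: "k \<noteq> j"
    and a1: "L i = L' i" and a2: "L j = L' j"
    and ok1: "okg R Gs" and ok2: "okg R Gs'"
    and L: "L = run x Gs" and L': "L' = run x' Gs'"
  shows "(stp (Suc R))\<^sup>*\<^sup>* (x, Gs @ [Gf]) (x', Gs' @ [Gf])"
proof -
  define G2 where "G2 = graph_of_partition [{i}, {k, j}]"
  define G3 where "G3 = graph_of_partition [{i}, {j}, {k}]"
  define G1 where "G1 = graph_of_partition [{i, j}, {k}]"
  have IS: "Gf \<in> IS_graphs" "G1 \<in> IS_graphs" "G2 \<in> IS_graphs" "G3 \<in> IS_graphs"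
    unfolding IS_graphs_def Gf_def G1_def G2_def G3_def
    using op1 op2[of i k j] op2b[of i j k] op3[of i j k] ij ki kj by blast+
  have all3: "u = k" if "u \<noteq> i" "u \<noteq> j" for u
    using that ij ki kj by (cases u; cases i; cases j; cases k; simp)
  have okS: "okg (Suc R) (Gs @ [G])" "okg (Suc R) (Gs' @ [G])" if "G \<in> IS_graphs" for G
    using ok1 ok2 that by (auto simp: okg_def)
  have rs: "round_step G L v = round_step G' L' v"
    if "\<And>u. (u, v) \<in> G \<longleftrightarrow> (u, v) \<in> G'" "\<And>u. (u, v) \<in> G \<Longrightarrow> L u = L' u" for G G' L L' v
    using that unfolding round_step_def by auto
  have G2all: "(u, k) \<in> G2" "(u, j) \<in> G2" for u
  proof -
    have "u = i \<or> u = j \<or> u = k" using all3[of u] by blast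
    then show "(u, k) \<in> G2" "(u, j) \<in> G2" unfolding G2_def gp2 by blast+
  qed
  have Gfall: "(u, v) \<in> Gf" for u v unfolding Gf_def gp1 by simp
  have s1: "stp (Suc R) (x, Gs @ [Gf]) (x, Gs @ [G2])"
    unfolding stp_def agree2_def using IS okS
    apply (simp add: run_snoc)
    apply (rule exI[of _ k], rule exI[of _ j])
    using kj G2all Gfall by (simp add: round_step_def)
  have s2: "stp (Suc R) (x, Gs @ [G2]) (x, Gs @ [G3])"
    unfolding stp_def agree2_def using IS okS
    apply (simp add: run_snoc)
    apply (rule exI[of _ k], rule exI[of _ i])
    using kj ki ij by (auto intro!: rs simp: G3_def gp3 G2_def gp2)
  have s3: "stp (Suc R) (x, Gs @ [G3]) (x, Gs @ [G1])"
    unfolding stp_def agree2_def using IS okS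
    apply (simp add: run_snoc)
    apply (rule exI[of _ k], rule exI[of _ j])
    using kj ki ij by (auto intro!: rs simp: G3_def gp3 G1_def gp2)
  have s4: "stp (Suc R) (x, Gs @ [G1]) (x', Gs' @ [G1])"
    unfolding stp_def agree2_def using IS okS
    apply (simp add: run_snoc flip: L L')
    apply (rule exI[of _ i], rule exI[of _ j])
    using kj ki ij a1 a2 by (auto intro!: rs simp: G1_def gp2)
  have s5: "stp (Suc R) (x', Gs' @ [G1]) (x', Gs' @ [G3])"
    unfolding stp_def agree2_def using IS okS
    apply (simp add: run_snoc)
    apply (rule exI[of _ k], rule exI[of _ j])
    using kj ki ij by (auto intro!: rs simp: G3_def gp3 G1_def gp2)
  have s6: "stp (Suc R) (x', Gs' @ [G3]) (x', Gs' @ [G2])"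
    unfolding stp_def agree2_def using IS okS
    apply (simp add: run_snoc)
    apply (rule exI[of _ k], rule exI[of _ i])
    using kj ki ij by (auto intro!: rs simp: G3_def gp3 G2_def gp2)
  have s7: "stp (Suc R) (x', Gs' @ [G2]) (x', Gs' @ [Gf])"
    unfolding stp_def agree2_def using IS okS
    apply (simp add: run_snoc)
    apply (rule exI[of _ k], rule exI[of _ j])
    using kj G2all Gfall by (simp add: round_step_def)
  note rr = converse_rtranclp_into_rtranclp[where r="stp (Suc R)"]
  show ?thesis
    apply (rule rr[OF s1])
    apply (rule rr[OF s2])
    apply (rule rr[OF s3])
    apply (rule rr[OF s4])
    apply (rule rr[OF s5])
    apply (rule rr[OF s6])
    apply (rule rr[OF s7])
    by (rule rtranclp.rtrancl_refl)
qed

lemma ext_step: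
  assumes "stp R (x, Gs) (x', Gs')"
  shows "(stp (Suc R))\<^sup>*\<^sup>* (x, Gs @ [Gf]) (x', Gs' @ [Gf])"
proof -
  from assms obtain i j where ij: "i \<noteq> j" and a: "run x Gs i = run x' Gs' i" "run x Gs j = run x' Gs' j"
    and ok: "okg R Gs" "okg R Gs'"
    by (auto simp: stp_def agree2_def)
  obtain k where "k \<noteq> i" "k \<noteq> j" using third[OF ij] by blast
  then show ?thesis using one_round[OF ij _ _ a ok refl refl] by blast
qed

lemma ext_chain:
  assumes "(stp R)\<^sup>*\<^sup>* p q"
  shows "(stp (Suc R))\<^sup>*\<^sup>* (fst p, snd p @ [Gf]) (fst q, snd q @ [Gf])"
  using assms
proof (induction rule: rtranclp_induct)
  case base then show ?case by simp
next
  case (step y z)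
  have "(stp (Suc R))\<^sup>*\<^sup>* (fst y, snd y @ [Gf]) (fst z, snd z @ [Gf])"
    using ext_step[of R "fst y" "snd y" "fst z" "snd z"] step(2) by simp
  then show ?case using step(3) by (meson rtranclp_trans)
qed

lemma Gf_IS: "Gf \<in> IS_graphs"
  unfolding IS_graphs_def Gf_def using op1 by blast

lemma base_chain: "(stp 0)\<^sup>*\<^sup>* (\<lambda>_. True, []) (\<lambda>_. False, [])"
proof -
  define x1 where "x1 = (\<lambda>i. i \<noteq> Ag_a)"
  define x2 where "x2 = (\<lambda>i. i = Ag_c)"
  have ok: "okg 0 []" by (simp add: okg_def)
  have t1: "stp 0 (\<lambda>_. True, []) (x1, [])"
    unfolding stp_def agree2_def using ok
    by (rule_tac conjI, simp, rule_tac conjI, simp, rule_tac exI[of _ Ag_b], rule_tac exI[of _ Ag_c])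
       (simp add: run_def initial_state_def x1_def)
  have t2: "stp 0 (x1, []) (x2, [])"
    unfolding stp_def agree2_def using ok
    by (rule_tac conjI, simp, rule_tac conjI, simp, rule_tac exI[of _ Ag_a], rule_tac exI[of _ Ag_c])
       (simp add: run_def initial_state_def x1_def x2_def)
  have t3: "stp 0 (x2, []) (\<lambda>_. False, [])"
    unfolding stp_def agree2_def using ok
    by (rule_tac conjI, simp, rule_tac conjI, simp, rule_tac exI[of _ Ag_a], rule_tac exI[of _ Ag_b])
       (simp add: run_def initial_state_def x2_def)
  show ?thesis
    by (rule converse_rtranclp_into_rtranclp[where r="stp 0", OF t1 converse_rtranclp_into_rtranclp[where r="stp 0", OF t2 converse_rtranclp_into_rtranclp[where r="stp 0", OF t3 rtranclp.rtrancl_refl]]])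
qed

lemma all_chain: "(stp R)\<^sup>*\<^sup>* (\<lambda>_. True, replicate R Gf) (\<lambda>_. False, replicate R Gf)"
proof (induction R)
  case 0 then show ?case using base_chain by simp
next
  case (Suc R)
  from ext_chain[OF Suc] show ?case by (simp add: replicate_append_same[symmetric])
qed

lemma propagate:
  assumes sol: "solves_majority_consensus R \<delta>"
    and st: "stp R p q" and one: "\<forall>i. \<delta> i (run (fst p) (snd p) i)"
  shows "\<forall>i. \<delta> i (run (fst q) (snd q) i)"
proof -
  from st obtain i j where ij: "i \<noteq> j" and a: "run (fst p) (snd p) i = run (fst q) (snd q) i"
    "run (fst p) (snd p) j = run (fst q) (snd q) j" and ok: "okg R (snd q)"
    by (auto simp: stp_def agree2_def)
  define y where "y = (\<lambda>k. \<delta> k (run (fst q) (snd q) k))"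
  have maj: "majority_agreement y"
    using sol ok unfolding solves_majority_consensus_def okg_def y_def Let_def by blast
  have yi: "y i" "y j" using one a by (metis y_def)+
  have "{k. y k = False} \<subseteq> UNIV - {i, j}" using yi by auto
  moreover have "card (UNIV - {i, j} :: agent set) = 1"
    using ij by (cases i; cases j; simp add: UNIV_agent)
  moreover have "finite (UNIV - {i, j} :: agent set)" by (simp add: UNIV_agent)
  ultimately have "card {k. y k = False} \<le> 1"
    using card_mono by metis
  then have "y Ag_a = y Ag_b \<and> y Ag_b = y Ag_c" using maj by (simp add: majority_agreement_def)
  then have "\<forall>k. y k" using yi by (metis agent.exhaust)
  then show ?thesis by (simp add: y_def)
qed

theorem mainTheorem1:
  fixes R :: nat
  shows "\<not> (\<exists>\<delta> :: agent \<Rightarrow> lstate \<Rightarrow> bool. solves_majority_consensus R \<delta>)"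
proof
  assume "\<exists>\<delta> :: agent \<Rightarrow> lstate \<Rightarrow> bool. solves_majority_consensus R \<delta>"
  then obtain \<delta> :: "agent \<Rightarrow> lstate \<Rightarrow> bool" where sol: "solves_majority_consensus R \<delta>" by blast
  have okr: "length (replicate R Gf) = R" "set (replicate R Gf) \<subseteq> IS_graphs" using Gf_IS by auto
  have val: "validity x (\<lambda>i. \<delta> i (run x (replicate R Gf) i))" for x
    using sol okr unfolding solves_majority_consensus_def Let_def by blast
  have start: "\<forall>i. \<delta> i (run (fst (\<lambda>_. True, replicate R Gf)) (snd (\<lambda>_. True, replicate R Gf)) i)"
    using val[of "\<lambda>_. True"] by (auto simp: validity_def)
  have "\<forall>i. \<delta> i (run (fst q) (snd q) i)" if "(stp R)\<^sup>*\<^sup>* (\<lambda>_. True, replicate R Gf) q" for q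
    using that
  proof (induction rule: rtranclp_induct)
    case base then show ?case using start by simp
  next
    case (step y z) then show ?case using propagate[OF sol] by blast
  qed
  from this[OF all_chain] have "\<delta> Ag_a (run (\<lambda>_. False) (replicate R Gf) Ag_a)" by simp
  moreover have "\<not> \<delta> Ag_a (run (\<lambda>_. False) (replicate R Gf) Ag_a)"
    using val[of "\<lambda>_. False"] by (auto simp: validity_def)
  ultimately show False by simp
qed

end
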